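(* (1) Let $S$ be a nonempty subset of $\mathbb{Z}$ and let $\mathcal{T}_1\subseteq\mathcal{T}_2\subseteq\mathbb{N}$. Then for all integers $0\le k<|S|$, $k!_{S,\mathcal{T}_1}$ divides $k!_{S,\mathcal{T}_2}$. (2) Let $S_1\subseteq S_2$ be nonempty subsets of $\mathbb{Z}$ and let $\mathcal{T}\subseteq\mathbb{N}$. Then for all integers $0\le k<|S_1|$, $k!_{S_2,\mathcal{T}}$ divides $k!_{S_1,\mathcal{T}}$.
   Context: $\mathbb{N}=\{0,1,2,\dots\}$. For an integer $b\ge0$ and $a\in\mathbb{Z}$ define $\operatorname{ord}_b(a):=\sup\{k\in\mathbb{N}: a\mathbb{Z}\subseteq b^k\mathbb{Z}\}$ (convention $0^0=1$); thus for $b\ge2$ it is the largest $k$ with $b^k\mid a$ ($+\infty$ for $a=0$), $\operatorname{ord}_0(a)=+\infty$ if $a=0$ and $0$ otherwise, and $\operatorname{ord}_1(a)=+\infty$. For nonempty $S\subseteq\mathbb{Z}$, a $b$-ordering of $S$ is a sequence $(a_i)_{i\ge0}$ in $S$ such that for each $i\ge1$, $a_i$ attains $\min_{a'\in S}\sum_{j=0}^{i-1}\operatorname{ord}_b(a'-a_j)$; the $b$-exponent sequence is $\alpha_k(S,b):=\sum_{j=0}^{k-1}\operatorname{ord}_b(a_k-a_j)$ for any $b$-ordering (independent of the choice). For $\mathcal{T}\subseteq\mathbb{N}$ the generalized factorial is $k!_{S,\mathcal{T}}:=\prod_{b\in\mathcal{T}}b^{\alpha_k(S,b)}$, with conventions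 $b^{+\infty}=0$ for $b=0$ and $b\ge2$, $1^{+\infty}=1$, and $b^0=1$ for all $b\in\mathbb{N}$. *)

theory Defs
  imports Main "HOL-Library.Extended_Nat"
begin

text \<open>ord_b(a) = sup of k such that a Z is contained in b^k Z, i.e. b^k divides a
  (with 0^0 = 1); the supremum is taken in the extended naturals.\<close>
definition ordb :: "nat \<Rightarrow> int \<Rightarrow> enat" where
  "ordb b a = Sup {enat k | k. (int b) ^ k dvd a}"

definition is_b_ordering :: "int set \<Rightarrow> nat \<Rightarrow> (nat \<Rightarrow> int) \<Rightarrow> bool" where
  "is_b_ordering S b a \<longleftrightarrow>
     (\<forall>i. a i \<in> S) \<and>
     (\<forall>i\<ge>1. \<forall>a'\<in>S. (\<Sum>j<i. ordb b (a i - a j)) \<le> (\<Sum>j<i. ordb b (a' - a j)))"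

text \<open>The b-exponent sequence, computed from some (any) b-ordering.\<close>
definition alpha :: "int set \<Rightarrow> nat \<Rightarrow> nat \<Rightarrow> enat" where
  "alpha S b k = (let a = (SOME a. is_b_ordering S b a) in (\<Sum>j<k. ordb b (a k - a j)))"

definition epow :: "nat \<Rightarrow> enat \<Rightarrow> nat" where
  "epow b e = (case e of enat n \<Rightarrow> b ^ n | \<infinity> \<Rightarrow> (if b = 1 then 1 else 0))"

text \<open>Generalised factorial k!_{S,T} = prod over b in T of b^{alpha_k(S,b)}, taken over the
  factors different from 1 (finitely many whenever k < |S|).\<close>
definition gfact :: "int set \<Rightarrow> nat set \<Rightarrow> nat \<Rightarrow> nat" where
  "gfact S T k = (\<Prod>b\<in>{b\<in>T. epow b (alpha S b k) \<noteq> 1}. epow b (alpha S b k))"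

end

theory Submission
  imports Defs
begin

lemma ordb_0: "ordb b 0 = \<infinity>"
proof -
  have "{enat k | k. (int b) ^ k dvd 0} = range enat" by auto
  moreover have "infinite (range enat)" by (simp add: infinite_UNIV_nat inj_on_def finite_image_iff)
  ultimately show ?thesis unfolding ordb_def Sup_enat_def by auto
qed

lemma ordb_eq_0_iff: "ordb b a = 0 \<longleftrightarrow> \<not> int b dvd a"
proof -
  have "ordb b a = 0 \<longleftrightarrow> (\<forall>x\<in>{enat k | k. (int b) ^ k dvd a}. x = 0)"
    unfolding ordb_def using Sup_bot_conv(1)[of "{enat k | k. (int b) ^ k dvd a}"]
    by (simp add: bot_enat_def)
  also have "\<dots> \<longleftrightarrow> \<not> int b dvd a"
  proof
    assume "\<forall>x\<in>{enat k | k. (int b) ^ k dvd a}. x = 0"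
    then show "\<not> int b dvd a" by (metis (mono_tags, lifting) enat_0_iff(1) mem_Collect_eq one_neq_zero power_one_right)
  next
    assume h: "\<not> int b dvd a"
    show "\<forall>x\<in>{enat k | k. (int b) ^ k dvd a}. x = 0"
    proof clarify
      fix k assume "int b ^ k dvd a"
      then show "enat k = 0" using h
        by (metis dvd_power dvd_trans enat_0_iff(2) not_gr_zero)
    qed
  qed
  finally show ?thesis .
qed

lemma ordb_char:
  assumes "b \<ge> 2" "int b ^ m dvd a" "\<not> int b ^ Suc m dvd a"
  shows "ordb b a = enat m"
proof -
  have s1: "int b ^ k dvd a \<longleftrightarrow> k \<le> m" for k
    using assms by (metis dvd_trans le_imp_power_dvd not_less_eq_eq)
  have "{enat k | k. (int b) ^ k dvd a} = enat ` {..m}"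
    using s1 by auto
  moreover have "Sup (enat ` {..m}) = enat m"
    by (rule antisym) (auto intro: Sup_upper Sup_least)
  ultimately show ?thesis unfolding ordb_def by simp
qed

lemma ordb_ex:
  assumes "b \<ge> 2" "a \<noteq> 0"
  shows "\<exists>m. int b ^ m dvd a \<and> \<not> int b ^ Suc m dvd a"
proof -
  have ex: "\<exists>k. \<not> int b ^ k dvd a"
  proof
    have "int (nat \<bar>a\<bar>) < 2 ^ nat \<bar>a\<bar>" by (metis of_nat_less_two_power of_nat_numeral of_nat_power)
    also have "\<dots> \<le> int b ^ nat \<bar>a\<bar>" using assms(1) by (simp add: power_mono)
    finally have "\<bar>a\<bar> < int b ^ nat \<bar>a\<bar>" by simp
    then show "\<not> int b ^ nat \<bar>a\<bar> dvd a" using assms(2)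
      by (metis dvd_imp_le_int abs_of_nonneg not_le zero_le_power of_nat_0_le_iff)
  qed
  define k where "k = (LEAST k. \<not> int b ^ k dvd a)"
  have k1: "\<not> int b ^ k dvd a" unfolding k_def using LeastI_ex[OF ex] .
  have "k \<noteq> 0" using k1 by (rule_tac ccontr) simp
  then obtain m where "k = Suc m" using not0_implies_Suc by blast
  moreover have "int b ^ m dvd a" using not_less_Least[of m "\<lambda>k. \<not> int b ^ k dvd a"] k_def \<open>k = Suc m\<close> by auto
  ultimately show ?thesis using k1 by blast
qed

lemma ordb_mult:
  assumes "b \<ge> 2"
  shows "ordb b (int b * a) = eSuc (ordb b a)"
proof (cases "a = 0")
  case True then show ?thesis by (simp add: ordb_0)
next
  case False
  then obtain m where m: "int b ^ m dvd a" "\<not> int b ^ Suc m dvd a" using ordb_ex assms by blast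
  have b0: "int b \<noteq> 0" using assms by simp
  have "int b ^ Suc m dvd int b * a" using m(1) by (simp add: mult_dvd_mono)
  moreover have "\<not> int b ^ Suc (Suc m) dvd int b * a" using m(2) b0 by simp
  ultimately have "ordb b (int b * a) = enat (Suc m)" using ordb_char assms by blast
  then show ?thesis using ordb_char[OF assms m] by (simp add: eSuc_enat)
qed

definition wt :: "nat \<Rightarrow> int list \<Rightarrow> int \<Rightarrow> enat" where
  "wt b L y = (\<Sum>x\<leftarrow>L. ordb b (y - x))"

lemma wt_Nil[simp]: "wt b [] y = 0" by (simp add: wt_def)
lemma wt_Cons[simp]: "wt b (x # L) y = ordb b (y - x) + wt b L y" by (simp add: wt_def)
lemma wt_append[simp]: "wt b (L1 @ L2) y = wt b L1 y + wt b L2 y" by (simp add: wt_def)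

definition grd :: "nat \<Rightarrow> int set \<Rightarrow> int list \<Rightarrow> bool" where
  "grd b U L = (\<forall>i<length L. L!i \<in> U \<and> (\<forall>y\<in>U. wt b (take i L) (L!i) \<le> wt b (take i L) y))"

definition bnd :: "nat \<Rightarrow> int list \<Rightarrow> enat \<Rightarrow> bool" where
  "bnd b L t = (\<forall>i<length L. wt b (take i L) (L!i) \<le> t)"

lemma grd_Nil[simp]: "grd b U []" by (simp add: grd_def)
lemma bnd_Nil[simp]: "bnd b [] t" by (simp add: bnd_def)

lemma grd_snoc: "grd b U (L @ [x]) \<longleftrightarrow> grd b U L \<and> x \<in> U \<and> (\<forall>y\<in>U. wt b L x \<le> wt b L y)"
  unfolding grd_def by (auto simp: nth_append less_Suc_eq)

lemma bnd_snoc: "bnd b (L @ [x]) t \<longleftrightarrow> bnd b L t \<and> wt b L x \<le> t"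
  unfolding bnd_def by (auto simp: nth_append less_Suc_eq)

lemma grd_take: "grd b U L \<Longrightarrow> grd b U (take n L)"
  unfolding grd_def by (auto simp: min_def)

lemma bnd_take: "bnd b L t \<Longrightarrow> bnd b (take n L) t"
  unfolding bnd_def by (auto simp: min_def)

lemma grd_set: "grd b U L \<Longrightarrow> set L \<subseteq> U"
  unfolding grd_def by (auto simp: in_set_conv_nth)

lemma grd_mono: "grd b U L \<Longrightarrow> V \<subseteq> U \<Longrightarrow> set L \<subseteq> V \<Longrightarrow> grd b V L"
  unfolding grd_def by (auto simp: subset_iff)

lemma wt_filter:
  assumes "y mod int b = r"
  shows "wt b L y = wt b (filter (\<lambda>x. x mod int b = r) L) y"
proof (induction L)
  case Nil then show ?case by simp
next
  case (Cons x L)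
  show ?case
  proof (cases "x mod int b = r")
    case True then show ?thesis using Cons by simp
  next
    case False
    then have "\<not> int b dvd y - x" using assms by (simp add: mod_eq_dvd_iff[symmetric])
    then have "ordb b (y - x) = 0" by (simp add: ordb_eq_0_iff)
    then show ?thesis using Cons False by simp
  qed
qed

lemma grd_filter:
  "grd b U L \<Longrightarrow> grd b {x\<in>U. x mod int b = r} (filter (\<lambda>x. x mod int b = r) L)"
proof (induction L rule: rev_induct)
  case Nil then show ?case by simp
next
  case (snoc x L)
  then have g: "grd b U L" "x \<in> U" "\<forall>y\<in>U. wt b L x \<le> wt b L y" by (auto simp: grd_snoc)
  show ?case
  proof (cases "x mod int b = r")
    case True
    have "\<forall>y\<in>{x \<in> U. x mod int b = r}. wt b (filter (\<lambda>x. x mod int b = r) L) x \<le> wt b (filter (\<lambda>x. x mod int b = r) L) y"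
    proof
      fix y assume "y \<in> {x \<in> U. x mod int b = r}"
      then have "y \<in> U" "y mod int b = r" by auto
      then show "wt b (filter (\<lambda>x. x mod int b = r) L) x \<le> wt b (filter (\<lambda>x. x mod int b = r) L) y"
        using g(3) wt_filter[OF True, of L] wt_filter[of y b r L] by metis
    qed
    then show ?thesis using snoc g True by (simp add: grd_snoc)
  next
    case False then show ?thesis using snoc g by simp
  qed
qed

lemma bnd_filter:
  "bnd b L t \<Longrightarrow> bnd b (filter (\<lambda>x. x mod int b = r) L) t"
proof (induction L rule: rev_induct)
  case Nil then show ?case by simp
next
  case (snoc x L)
  then have g: "bnd b L t" "wt b L x \<le> t" by (auto simp: bnd_snoc)
  show ?case
  proof (cases "x mod int b = r")
    case True
    then show ?thesis using snoc g wt_filter[OF True, of L] by (simp add: bnd_snoc)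
  next
    case False then show ?thesis using snoc g by simp
  qed
qed

lemma grd_mono_wt:
  assumes "grd b U L" "j < length L"
  shows "i \<le> j \<Longrightarrow> wt b (take i L) (L!i) \<le> wt b (take j L) (L!j)"
  using assms(2)
proof (induction j)
  case 0 then show ?case by simp
next
  case (Suc j)
  show ?case
  proof (cases "i = Suc j")
    case True then show ?thesis by simp
  next
    case False
    then have "i \<le> j" using Suc by simp
    then have "wt b (take i L) (L!i) \<le> wt b (take j L) (L!j)" using Suc by simp
    also have "\<dots> \<le> wt b (take j L) (L!Suc j)"
      using assms(1) Suc(3) unfolding grd_def by (metis Suc_lessD nth_mem)
    also have "\<dots> \<le> wt b (take (Suc j) L) (L!Suc j)"
      using Suc(3) by (simp add: take_Suc_conv_app_nth)
    finally show ?thesis .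
  qed
qed

lemma grd_bnd:
  assumes "grd b U (A0 @ [z])"
  shows "bnd b (A0 @ [z]) (wt b A0 z)"
  unfolding bnd_def
proof clarify
  fix i assume i: "i < length (A0 @ [z])"
  have "wt b (take i (A0 @ [z])) ((A0 @ [z]) ! i) \<le> wt b (take (length A0) (A0 @ [z])) ((A0 @ [z]) ! length A0)"
    using grd_mono_wt[OF assms, of "length A0" i] i by simp
  then show "wt b (take i (A0 @ [z])) ((A0 @ [z]) ! i) \<le> wt b A0 z" by simp
qed

lemma length_classes:
  assumes "b > 0"
  shows "length L = (\<Sum>r\<in>{0..<int b}. length (filter (\<lambda>x. x mod int b = r) L))"
proof (induction L)
  case Nil then show ?case by simp
next
  case (Cons x L)
  have xin: "x mod int b \<in> {0..<int b}" using assms by simp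
  have "(\<Sum>r\<in>{0..<int b}. length (filter (\<lambda>x. x mod int b = r) (x # L)))
      = (\<Sum>r\<in>{0..<int b}. (if x mod int b = r then 1 else 0) + length (filter (\<lambda>x. x mod int b = r) L))"
    by (rule sum.cong) auto
  also have "\<dots> = (\<Sum>r\<in>{0..<int b}. (if x mod int b = r then 1 else 0)) + length L"
    by (simp add: sum.distrib Cons)
  also have "(\<Sum>r\<in>{0..<int b}. (if x mod int b = r then 1 else 0)) = (1::nat)"
    using xin by (simp add: sum.delta)
  finally show ?case by simp
qed

lemma wt_scale:
  assumes "b \<ge> 2" "\<forall>x\<in>T. int b dvd x - z" "set L \<subseteq> T" "y \<in> T"
  shows "wt b L y = of_nat (length L) + wt b (map (\<lambda>x. (x - z) div int b) L) ((y - z) div int b)"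
  using assms(3)
proof (induction L)
  case Nil then show ?case by simp
next
  case (Cons x L)
  have hx: "x - z = int b * ((x - z) div int b)" using assms Cons.prems by simp
  have hy: "y - z = int b * ((y - z) div int b)" using assms by simp
  have "y - x = int b * ((y - z) div int b - (x - z) div int b)"
    using hx hy by (simp add: algebra_simps)
  then have "ordb b (y - x) = eSuc (ordb b ((y - z) div int b - (x - z) div int b))"
    using ordb_mult[OF assms(1)] by simp
  then show ?case using Cons by (simp add: eSuc_plus_1 algebra_simps)
qed

lemma grd_scale:
  assumes "b \<ge> 2" "\<forall>x\<in>T. int b dvd x - z" "U \<subseteq> T" "grd b U L"
  shows "grd b ((\<lambda>x. (x - z) div int b) ` U) (map (\<lambda>x. (x - z) div int b) L)"
  unfolding grd_def
proof (intro allI impI conjI ballI)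
  define f where "f = (\<lambda>x. (x - z) div int b)"
  fix i assume i: "i < length (map (\<lambda>x. (x - z) div int b) L)"
  then have i': "i < length L" by simp
  have ci: "L!i \<in> U" using assms(4) i' unfolding grd_def by auto
  then show "map (\<lambda>x. (x - z) div int b) L ! i \<in> (\<lambda>x. (x - z) div int b) ` U" using i' by simp
  fix y' assume "y' \<in> (\<lambda>x. (x - z) div int b) ` U"
  then obtain y where y: "y \<in> U" "y' = f y" unfolding f_def by auto
  have st: "set (take i L) \<subseteq> T" using grd_set[OF assms(4)] assms(3) by (meson order_trans set_take_subset)
  have "wt b (take i L) (L!i) \<le> wt b (take i L) y" using assms(4) i' y(1) unfolding grd_def by auto
  then have "of_nat (length (take i L)) + wt b (map f (take i L)) (f (L!i))
     \<le> of_nat (length (take i L)) + wt b (map f (take i L)) (f y)"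
  proof -
    have "L!i \<in> T" "y \<in> T" using ci y(1) assms(3) by auto
    then show ?thesis using wt_scale[OF assms(1,2) st, of "L!i"] wt_scale[OF assms(1,2) st, of y]
      \<open>wt b (take i L) (L!i) \<le> wt b (take i L) y\<close> unfolding f_def by metis
  qed
  then have "wt b (map f (take i L)) (f (L!i)) \<le> wt b (map f (take i L)) (f y)"
    by (simp add: enat_add_left_cancel_le of_nat_eq_enat)
  then show "wt b (take i (map (\<lambda>x. (x - z) div int b) L)) (map (\<lambda>x. (x - z) div int b) L ! i)
         \<le> wt b (take i (map (\<lambda>x. (x - z) div int b) L)) y'"
    using i' y(2) unfolding f_def by (simp add: take_map)
qed

lemma main_aux:
  assumes b2: "b \<ge> 2"
  shows "finite T \<Longrightarrow> card T + n \<le> N \<Longrightarrow> (\<forall>x\<in>T. \<forall>y\<in>T. \<bar>x - y\<bar> \<le> int n) \<Longrightarrow>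
    set A0 \<subseteq> T \<Longrightarrow> z \<in> T \<Longrightarrow> grd b T C \<Longrightarrow> grd b (set (A0 @ [z])) (A0 @ [z]) \<Longrightarrow>
    length A0 = length C \<Longrightarrow> \<exists>y\<in>set (A0 @ [z]). wt b C y \<le> wt b A0 z"
proof (induction N arbitrary: T n C A0 z rule: less_induct)
  case (less N)
  note fin = less.prems(1) and cardN = less.prems(2) and diam = less.prems(3)
    and A0T = less.prems(4) and zT = less.prems(5) and gC = less.prems(6) and gA = less.prems(7)
    and len = less.prems(8)
  have CT: "set C \<subseteq> T" using grd_set[OF gC] .
  have b0: "int b > 0" using b2 by simp
  show ?case
  proof (cases "C = []")
    case True then show ?thesis by auto
  next
    case Cne: False
    show ?thesis
    proof (cases "\<exists>u\<in>T. \<exists>v\<in>T. u mod int b \<noteq> v mod int b")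
      case True
      then obtain u v where uv: "u \<in> T" "v \<in> T" "u mod int b \<noteq> v mod int b" by blast
      have "\<exists>r. length (filter (\<lambda>x. x mod int b = r) C) < length (filter (\<lambda>x. x mod int b = r) (A0 @ [z]))"
      proof (rule ccontr)
        assume "\<not> ?thesis"
        then have "\<forall>r. length (filter (\<lambda>x. x mod int b = r) (A0 @ [z])) \<le> length (filter (\<lambda>x. x mod int b = r) C)"
          by (simp add: not_less)
        then have "(\<Sum>r\<in>{0..<int b}. length (filter (\<lambda>x. x mod int b = r) (A0 @ [z])))
             \<le> (\<Sum>r\<in>{0..<int b}. length (filter (\<lambda>x. x mod int b = r) C))"
          by (intro sum_mono) auto
        then have "length (A0 @ [z]) \<le> length C"
          using length_classes[of b "A0 @ [z]"] length_classes[of b C] b2 by simp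
        then show False using len by simp
      qed
      then obtain r where r: "length (filter (\<lambda>x. x mod int b = r) C) < length (filter (\<lambda>x. x mod int b = r) (A0 @ [z]))"
        by blast
      define P where "P = (\<lambda>x::int. x mod int b = r)"
      define Tr where "Tr = {x\<in>T. x mod int b = r}"
      define Ar where "Ar = filter P (A0 @ [z])"
      define Cr where "Cr = filter P C"
      define j where "j = length Cr"
      have jA: "j < length Ar" using r unfolding j_def Ar_def Cr_def P_def .
      have TrT: "Tr \<subset> T"
      proof -
        have "Tr \<subseteq> T" unfolding Tr_def by auto
        moreover have "\<not> (u \<in> Tr \<and> v \<in> Tr)" using uv(3) unfolding Tr_def by auto
        ultimately show ?thesis using uv(1,2) unfolding psubset_eq by auto
      qed
      have cardTr: "card Tr < card T" using psubset_card_mono[OF fin TrT] .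
      have finTr: "finite Tr" using fin unfolding Tr_def by simp
      have gCr: "grd b Tr Cr" using grd_filter[OF gC, of r] unfolding Tr_def Cr_def P_def .
      have gAr: "grd b {x\<in>set (A0 @ [z]). x mod int b = r} Ar"
        using grd_filter[OF gA, of r] unfolding Ar_def P_def .
      have tk: "take (Suc j) Ar = take j Ar @ [Ar ! j]" using jA by (simp add: take_Suc_conv_app_nth)
      have setAr: "set Ar \<subseteq> Tr" using A0T zT unfolding Ar_def Tr_def P_def by auto
      have setA': "set (take (Suc j) Ar) \<subseteq> Tr" using set_take_subset[of "Suc j" Ar] setAr by (rule subset_trans)
      have gA': "grd b (set (take j Ar @ [Ar ! j])) (take j Ar @ [Ar ! j])"
      proof -
        have "grd b {x\<in>set (A0 @ [z]). x mod int b = r} (take (Suc j) Ar)" using grd_take[OF gAr] .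
        moreover have "set (take (Suc j) Ar) \<subseteq> {x\<in>set (A0 @ [z]). x mod int b = r}"
          using set_take_subset[of "Suc j" Ar] grd_set[OF gAr] by (rule subset_trans)
        ultimately have "grd b (set (take (Suc j) Ar)) (take (Suc j) Ar)"
          by (rule grd_mono[of b "{x\<in>set (A0 @ [z]). x mod int b = r}"]) auto
        then show ?thesis by (simp only: tk)
      qed
      have IH: "\<exists>y\<in>set (take j Ar @ [Ar ! j]). wt b Cr y \<le> wt b (take j Ar) (Ar ! j)"
      proof (rule less.IH[of "card Tr + n" Tr n "take j Ar" "Ar ! j" Cr])
        show "card Tr + n < N" using cardTr cardN by simp
        show "finite Tr" by fact
        show "card Tr + n \<le> card Tr + n" by simp
        show "\<forall>x\<in>Tr. \<forall>y\<in>Tr. \<bar>x - y\<bar> \<le> int n" using diam TrT by auto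
        show "set (take j Ar) \<subseteq> Tr" using setA' tk by simp
        show "Ar ! j \<in> Tr" using setA' tk by simp
        show "grd b Tr Cr" by fact
        show "grd b (set (take j Ar @ [Ar ! j])) (take j Ar @ [Ar ! j])" by fact
        show "length (take j Ar) = length Cr" using jA j_def by simp
      qed
      then obtain y where y: "y \<in> set (take j Ar @ [Ar ! j])" "wt b Cr y \<le> wt b (take j Ar) (Ar ! j)"
        by blast
      have "y \<in> set Ar" using y(1) tk by (metis in_set_takeD)
      then have yA: "y \<in> set (A0 @ [z])" "y mod int b = r"
        unfolding Ar_def P_def by (auto split: if_splits)
      have "wt b C y = wt b Cr y" using wt_filter[OF yA(2)] unfolding Cr_def P_def by simp
      also have "\<dots> \<le> wt b (take j Ar) (Ar ! j)" by (fact y(2))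
      also have "\<dots> \<le> wt b A0 z"
      proof -
        have "bnd b (A0 @ [z]) (wt b A0 z)" using grd_bnd[OF gA] .
        then have "bnd b Ar (wt b A0 z)" using bnd_filter unfolding Ar_def P_def by blast
        then show ?thesis using jA unfolding bnd_def by blast
      qed
      finally show ?thesis using yA(1) by blast
    next
      case False
      then have same: "\<forall>x\<in>T. int b dvd x - z" using zT by (metis mod_eq_dvd_iff)
      show ?thesis
      proof (cases "\<exists>u\<in>T. \<exists>v\<in>T. u \<noteq> v")
        case False
        then have allz: "\<forall>x\<in>T. x = z" using zT by blast
        have "C = A0"
        proof (rule nth_equalityI)
          show "length C = length A0" using len by simp
          fix i assume "i < length C"
          then show "C ! i = A0 ! i" using allz CT A0T len by (metis in_mono nth_mem)
        qed
        then show ?thesis by simp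
      next
        case True
        then obtain u v where uv: "u \<in> T" "v \<in> T" "u \<noteq> v" by blast
        have n1: "n \<ge> 1" using diam uv by fastforce
        define f where "f = (\<lambda>x. (x - z) div int b)"
        define n' where "n' = n div b"
        have n'n: "n' < n" unfolding n'_def using n1 b2 by simp
        have fx: "x - z = int b * f x" if "x \<in> T" for x using same that unfolding f_def by simp
        have diam': "\<forall>x\<in>f ` T. \<forall>y\<in>f ` T. \<bar>x - y\<bar> \<le> int n'"
        proof clarify
          fix x y assume xy: "x \<in> T" "y \<in> T"
          have "x - y = int b * (f x - f y)" using fx[OF xy(1)] fx[OF xy(2)] by (simp add: algebra_simps)
          then have "\<bar>x - y\<bar> = int b * \<bar>f x - f y\<bar>" by (simp add: abs_mult)
          then have "int b * \<bar>f x - f y\<bar> \<le> int n" using diam xy by metis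
          then have "\<bar>f x - f y\<bar> \<le> int n div int b" using b0
            using zdiv_mono1[of "int b * \<bar>f x - f y\<bar>" "int n" "int b"] by simp
          then show "\<bar>f x - f y\<bar> \<le> int n'" unfolding n'_def by (simp add: zdiv_int)
        qed
        have gC': "grd b (f ` T) (map f C)" using grd_scale[OF b2 same order_refl gC] unfolding f_def .
        have gA': "grd b (f ` set (A0 @ [z])) (map f (A0 @ [z]))"
          using grd_scale[OF b2 same _ gA] A0T zT unfolding f_def by auto
        have IH: "\<exists>y\<in>set (map f A0 @ [f z]). wt b (map f C) y \<le> wt b (map f A0) (f z)"
        proof (rule less.IH[of "card (f ` T) + n'" "f ` T" n'])
          show "card (f ` T) + n' < N" using card_image_le[OF fin, of f] n'n cardN by simp
          show "finite (f ` T)" using fin by simp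
          show "card (f ` T) + n' \<le> card (f ` T) + n'" by simp
          show "\<forall>x\<in>f ` T. \<forall>y\<in>f ` T. \<bar>x - y\<bar> \<le> int n'" by fact
          show "set (map f A0) \<subseteq> f ` T" using A0T by auto
          show "f z \<in> f ` T" using zT by simp
          show "grd b (f ` T) (map f C)" by fact
          show "grd b (set (map f A0 @ [f z])) (map f A0 @ [f z])" using gA' by simp
          show "length (map f A0) = length (map f C)" using len by simp
        qed
        then obtain y' where y': "y' \<in> set (map f A0 @ [f z])" "wt b (map f C) y' \<le> wt b (map f A0) (f z)"
          by blast
        then obtain y where y: "y \<in> set (A0 @ [z])" "y' = f y" by auto
        have yT: "y \<in> T" using y A0T zT by auto
        have "wt b C y = of_nat (length C) + wt b (map f C) (f y)"
          using wt_scale[OF b2 same CT yT] unfolding f_def .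
        also have "\<dots> \<le> of_nat (length A0) + wt b (map f A0) (f z)"
          using y' y len by (simp add: add_left_mono)
        also have "\<dots> = wt b A0 z"
          using wt_scale[OF b2 same A0T zT] unfolding f_def by simp
        finally show ?thesis using y by blast
      qed
    qed
  qed
qed

lemma wt_upt: "wt b (map a [0..<k]) y = (\<Sum>j<k. ordb b (y - a j))"
  by (induction k) (simp_all add: add.commute)

lemma ord_grd: "is_b_ordering S b a \<Longrightarrow> grd b S (map a [0..<n])"
  unfolding grd_def
proof (intro allI impI conjI ballI)
  fix i assume o: "is_b_ordering S b a" and i: "i < length (map a [0..<n])"
  then show "map a [0..<n] ! i \<in> S" unfolding is_b_ordering_def by simp
  fix y assume y: "y \<in> S"
  have t: "take i (map a [0..<n]) = map a [0..<i]" using i by (simp add: take_map)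
  show "wt b (take i (map a [0..<n])) (map a [0..<n] ! i) \<le> wt b (take i (map a [0..<n])) y"
  proof (cases "i = 0")
    case True then show ?thesis by simp
  next
    case False
    then show ?thesis using o y i unfolding t wt_upt is_b_ordering_def by simp
  qed
qed

lemma ord_exists:
  assumes "S \<noteq> {}"
  shows "\<exists>a. is_b_ordering S b a"
proof -
  define pick where "pick = (\<lambda>L. SOME x. x \<in> S \<and> (\<forall>y\<in>S. wt b L x \<le> wt b L y))"
  have pick: "pick L \<in> S \<and> (\<forall>y\<in>S. wt b L (pick L) \<le> wt b L y)" for L
  proof -
    define m where "m = (LEAST v. v \<in> wt b L ` S)"
    have "m \<in> wt b L ` S" unfolding m_def using assms by (metis LeastI_ex ex_in_conv imageI)
    then obtain x where x: "x \<in> S" "wt b L x = m" by auto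
    have "\<forall>y\<in>S. wt b L x \<le> wt b L y" using x unfolding m_def by (simp add: Least_le)
    then have "\<exists>x. x \<in> S \<and> (\<forall>y\<in>S. wt b L x \<le> wt b L y)" using x by blast
    then show ?thesis unfolding pick_def by (rule someI_ex)
  qed
  define pre where "pre = rec_nat [] (\<lambda>n L. L @ [pick L])"
  have pre0: "pre 0 = []" and preS: "pre (Suc n) = pre n @ [pick (pre n)]" for n
    unfolding pre_def by simp_all
  define a where "a = (\<lambda>n. pick (pre n))"
  have prem: "pre n = map a [0..<n]" for n
    by (induction n) (simp_all add: pre0 preS a_def)
  have "is_b_ordering S b a"
    unfolding is_b_ordering_def
  proof (intro conjI allI impI ballI)
    fix i show "a i \<in> S" unfolding a_def using pick by blast
  next
    fix i :: nat and a' assume "1 \<le> i" "a' \<in> S"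
    then have "wt b (pre i) (a i) \<le> wt b (pre i) a'" unfolding a_def using pick by blast
    then show "(\<Sum>j<i. ordb b (a i - a j)) \<le> (\<Sum>j<i. ordb b (a' - a j))"
      unfolding prem wt_upt .
  qed
  then show ?thesis by blast
qed

lemma alpha_some:
  assumes "S \<noteq> {}"
  shows "is_b_ordering S b (SOME a. is_b_ordering S b a)"
    "alpha S b k = wt b (map (SOME a. is_b_ordering S b a) [0..<k]) ((SOME a. is_b_ordering S b a) k)"
  using someI_ex[OF ord_exists[OF assms]] unfolding alpha_def Let_def wt_upt by auto

lemma alpha_mono:
  assumes "b \<ge> 2" "S1 \<noteq> {}" "S1 \<subseteq> S2"
  shows "alpha S2 b k \<le> alpha S1 b k"
proof -
  have S2: "S2 \<noteq> {}" using assms by auto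
  define a where "a = (SOME a. is_b_ordering S1 b a)"
  define c where "c = (SOME a. is_b_ordering S2 b a)"
  have oa: "is_b_ordering S1 b a" and al1: "alpha S1 b k = wt b (map a [0..<k]) (a k)"
    using alpha_some[OF assms(2)] unfolding a_def by auto
  have oc: "is_b_ordering S2 b c" and al2: "alpha S2 b k = wt b (map c [0..<k]) (c k)"
    using alpha_some[OF S2] unfolding c_def by auto
  define A0 where "A0 = map a [0..<k]"
  define C where "C = map c [0..<k]"
  define T where "T = set C \<union> set (A0 @ [a k])"
  have gC2: "grd b S2 C" unfolding C_def using ord_grd[OF oc] .
  have gA1: "grd b S1 (A0 @ [a k])" unfolding A0_def using ord_grd[OF oa, of "Suc k"] by simp
  have sC: "set C \<subseteq> S2" using grd_set[OF gC2] .
  have sA: "set (A0 @ [a k]) \<subseteq> S1" using grd_set[OF gA1] .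
  have TS2: "T \<subseteq> S2" unfolding T_def using sC sA assms(3) by auto
  have gC: "grd b T C" using grd_mono[OF gC2 TS2] unfolding T_def by auto
  have gA: "grd b (set (A0 @ [a k])) (A0 @ [a k])" using grd_mono[OF gA1 sA] by simp
  have finT: "finite T" unfolding T_def by simp
  obtain n where n: "\<forall>x\<in>T. \<forall>y\<in>T. \<bar>x - y\<bar> \<le> int n"
  proof -
    define n where "n = Max ((\<lambda>(x, y). nat \<bar>x - y\<bar>) ` (T \<times> T))"
    have "\<forall>x\<in>T. \<forall>y\<in>T. \<bar>x - y\<bar> \<le> int n"
    proof (intro ballI)
      fix x y assume "x \<in> T" "y \<in> T"
      then have "nat \<bar>x - y\<bar> \<le> n" unfolding n_def using finT
        by (intro Max_ge) (auto intro!: imageI)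
      then show "\<bar>x - y\<bar> \<le> int n" by simp
    qed
    then show ?thesis using that by blast
  qed
  obtain y where y: "y \<in> set (A0 @ [a k])" "wt b C y \<le> wt b A0 (a k)"
    using main_aux[OF assms(1) finT order_refl n _ _ gC gA] unfolding T_def A0_def C_def by auto
  have "alpha S2 b k = wt b C (c k)" using al2 unfolding C_def .
  also have "\<dots> \<le> wt b C y"
  proof -
    have g: "grd b S2 (map c [0..<k] @ [c k])" using ord_grd[OF oc, of "Suc k"] by simp
    have "y \<in> S2" using y(1) sA assms(3) by auto
    then show ?thesis using g unfolding C_def by (simp add: grd_snoc)
  qed
  also have "\<dots> \<le> alpha S1 b k" using y(2) al1 unfolding A0_def by simp
  finally show ?thesis .
qed

lemma fresh:
  assumes o: "is_b_ordering S b a" and F: "F \<subseteq> S" "finite F" "card F = Suc k"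
    and sep: "\<forall>x\<in>F. \<forall>y\<in>F. int b dvd x - y \<longrightarrow> x = y"
  shows "(\<Sum>j<k. ordb b (a k - a j)) = 0"
proof -
  define g where "g = (\<lambda>j. SOME y. y \<in> F \<and> int b dvd y - a j)"
  define bad where "bad = {y\<in>F. \<exists>j<k. int b dvd y - a j}"
  have "bad \<subseteq> g ` {..<k}"
  proof
    fix y assume "y \<in> bad"
    then obtain j where j: "y \<in> F" "j < k" "int b dvd y - a j" unfolding bad_def by blast
    have "y \<in> F \<and> int b dvd y - a j" using j by simp
    then have gj: "g j \<in> F \<and> int b dvd g j - a j" unfolding g_def by (rule someI)
    have "int b dvd y - g j" using dvd_diff[OF j(3) conjunct2[OF gj]] by simp
    then have "y = g j" using sep j(1) conjunct1[OF gj] by simp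
    then show "y \<in> g ` {..<k}" using j(2) by blast
  qed
  then have "card bad \<le> card (g ` {..<k})" by (intro card_mono) auto
  also have "\<dots> \<le> card {..<k}" by (rule card_image_le) simp
  finally have "card bad \<le> k" by simp
  then have "bad \<noteq> F" using F by auto
  moreover have "bad \<subseteq> F" unfolding bad_def by auto
  ultimately have "F - bad \<noteq> {}" by auto
  then obtain y where y: "y \<in> F" "y \<notin> bad" by auto
  have "\<forall>j<k. \<not> int b dvd y - a j" using y unfolding bad_def by simp
  then have y0: "(\<Sum>j<k. ordb b (y - a j)) = 0"
    by (intro sum.neutral) (simp add: ordb_eq_0_iff)
  show ?thesis
  proof (cases "k = 0")
    case True then show ?thesis by simp
  next
    case False
    then have "(\<Sum>j<k. ordb b (a k - a j)) \<le> (\<Sum>j<k. ordb b (y - a j))"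
    proof -
      have "y \<in> S" using y F by auto
      moreover have "1 \<le> k" using False by simp
      ultimately show ?thesis using o unfolding is_b_ordering_def by blast
    qed
    then show ?thesis using y0 by simp
  qed
qed

lemma alpha_zero:
  assumes "S \<noteq> {}" "F \<subseteq> S" "finite F" "card F = Suc k"
    "\<forall>x\<in>F. \<forall>y\<in>F. int b dvd x - y \<longrightarrow> x = y"
  shows "alpha S b k = 0"
  using fresh[OF alpha_some(1)[OF assms(1)] assms(2-5)] unfolding alpha_def Let_def .

lemma epow_1_iff: "b \<noteq> 1 \<Longrightarrow> epow b e = 1 \<longleftrightarrow> e = 0"
  by (cases e) (auto simp: epow_def zero_enat_def)

lemma epow_0[simp]: "epow b 0 = 1"
  by (simp add: epow_def zero_enat_def)

lemma epow_one[simp]: "epow 1 e = 1"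
  by (cases e) (auto simp: epow_def)

lemma epow_Suc0[simp]: "epow (Suc 0) e = Suc 0"
  using epow_one[of e] by simp

lemma epow_dvd: "e2 \<le> e1 \<Longrightarrow> epow b e2 dvd epow b e1"
  by (cases e1; cases e2) (auto simp: epow_def le_imp_power_dvd)

lemma get_F:
  assumes "S \<noteq> {}" "finite S \<longrightarrow> k < card S"
  obtains F where "F \<subseteq> S" "finite F" "card F = Suc k"
proof (cases "finite S")
  case True
  then obtain F where F: "F \<subseteq> S" "card F = Suc k" using assms obtain_subset_with_card_n[of "Suc k" S] by auto
  have "finite F" using F(1) True by (rule finite_subset)
  show ?thesis by (rule that[OF F(1) \<open>finite F\<close> F(2)])
next
  case False
  obtain F where F: "finite F" "card F = Suc k" "F \<subseteq> S" using infinite_arbitrarily_large[OF False, of "Suc k"] by blast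
  show ?thesis by (rule that[OF F(3) F(1) F(2)])
qed

lemma fin_set:
  assumes "S \<noteq> {}" "finite S \<longrightarrow> k < card S"
  shows "finite {b\<in>T. epow b (alpha S b k) \<noteq> 1}"
proof -
  obtain F where F: "F \<subseteq> S" "finite F" "card F = Suc k" using get_F[OF assms] by blast
  define D where "D = Max ((\<lambda>(x, y). nat \<bar>x - y\<bar>) ` (F \<times> F))"
  have D: "\<bar>x - y\<bar> \<le> int D" if "x \<in> F" "y \<in> F" for x y
  proof -
    have "nat \<bar>x - y\<bar> \<le> D" unfolding D_def using F(2) that
      by (intro Max_ge) (auto intro!: imageI)
    then show ?thesis by simp
  qed
  have "{b\<in>T. epow b (alpha S b k) \<noteq> 1} \<subseteq> {..D}"
  proof
    fix b assume b: "b \<in> {b\<in>T. epow b (alpha S b k) \<noteq> 1}"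
    show "b \<in> {..D}"
    proof (rule ccontr)
      assume "b \<notin> {..D}"
      then have bD: "D < b" by simp
      have "\<forall>x\<in>F. \<forall>y\<in>F. int b dvd x - y \<longrightarrow> x = y"
      proof (intro ballI impI)
        fix x y assume xy: "x \<in> F" "y \<in> F" "int b dvd x - y"
        show "x = y"
        proof (rule ccontr)
          assume "x \<noteq> y"
          then have "\<bar>int b\<bar> \<le> \<bar>x - y\<bar>" using dvd_imp_le_int[OF _ xy(3)] by simp
          then show False using D[OF xy(1,2)] bD by simp
        qed
      qed
      then have "alpha S b k = 0" using alpha_zero[OF assms(1) F] by blast
      then show False using b by (cases "b = 1") (auto simp: epow_1_iff)
    qed
  qed
  then show ?thesis using finite_subset by blast
qed

theorem proposition3p10:
  shows "(\<forall>(S::int set) (T1::nat set) T2 (k::nat).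
            S \<noteq> {} \<and> T1 \<subseteq> T2 \<and> (finite S \<longrightarrow> k < card S)
              \<longrightarrow> gfact S T1 k dvd gfact S T2 k)
       \<and> (\<forall>(S1::int set) S2 (T::nat set) (k::nat).
            S1 \<noteq> {} \<and> S1 \<subseteq> S2 \<and> (finite S1 \<longrightarrow> k < card S1)
              \<longrightarrow> gfact S2 T k dvd gfact S1 T k)"
proof (intro conjI allI impI)
  fix S :: "int set" and T1 T2 :: "nat set" and k :: nat
  assume h: "S \<noteq> {} \<and> T1 \<subseteq> T2 \<and> (finite S \<longrightarrow> k < card S)"
  have h1: "S \<noteq> {}" "finite S \<longrightarrow> k < card S" using h by auto
  have fin: "finite {b\<in>T2. epow b (alpha S b k) \<noteq> 1}" by (rule fin_set[OF h1])
  have sub: "{b\<in>T1. epow b (alpha S b k) \<noteq> 1} \<subseteq> {b\<in>T2. epow b (alpha S b k) \<noteq> 1}" using h by auto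
  show "gfact S T1 k dvd gfact S T2 k"
    unfolding gfact_def by (rule prod_dvd_prod_subset[OF fin sub])
next
  fix S1 S2 :: "int set" and T :: "nat set" and k :: nat
  assume h: "S1 \<noteq> {} \<and> S1 \<subseteq> S2 \<and> (finite S1 \<longrightarrow> k < card S1)"
  then have S2: "S2 \<noteq> {}" by auto
  define B1 where "B1 = {b\<in>T. epow b (alpha S1 b k) \<noteq> 1}"
  define B2 where "B2 = {b\<in>T. epow b (alpha S2 b k) \<noteq> 1}"
  have h1: "S1 \<noteq> {}" "finite S1 \<longrightarrow> k < card S1" using h by auto
  have fin: "finite B1" unfolding B1_def by (rule fin_set[OF h1])
  obtain F where F: "F \<subseteq> S1" "finite F" "card F = Suc k" by (rule get_F[OF h1])
  have sep0: "\<forall>x\<in>F. \<forall>y\<in>F. int 0 dvd x - y \<longrightarrow> x = y" by simp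
  have FS2: "F \<subseteq> S2" using F(1) h by blast
  have a0: "alpha S2 0 k = 0"
    by (rule alpha_zero[OF S2 FS2 F(2,3) sep0])
  have ge2: "b \<ge> 2" if "b \<in> B2" for b
  proof -
    have "b \<noteq> 1" using that unfolding B2_def by auto
    moreover have "b \<noteq> 0"
    proof
      assume "b = 0"
      then have "epow b (alpha S2 b k) = 1" using a0 by simp
      then show False using that unfolding B2_def by simp
    qed
    ultimately show ?thesis by simp
  qed
  have mono: "alpha S2 b k \<le> alpha S1 b k" if "b \<in> B2" for b
    by (rule alpha_mono[OF ge2[OF that] h1(1)]) (use h in auto)
  have sub: "B2 \<subseteq> B1"
  proof
    fix b assume b: "b \<in> B2"
    then have "alpha S2 b k \<noteq> 0" using ge2[OF b] unfolding B2_def by (auto simp: epow_1_iff)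
    then have "alpha S1 b k \<noteq> 0" using mono[OF b] by auto
    moreover have "b \<noteq> 1" using ge2[OF b] by simp
    ultimately have "epow b (alpha S1 b k) \<noteq> 1" using epow_1_iff by blast
    then show "b \<in> B1" using b unfolding B1_def B2_def by blast
  qed
  have "prod (\<lambda>b. epow b (alpha S2 b k)) B2 dvd prod (\<lambda>b. epow b (alpha S1 b k)) B2"
    by (rule prod_dvd_prod) (use mono epow_dvd in blast)
  also have "\<dots> dvd prod (\<lambda>b. epow b (alpha S1 b k)) B1"
    by (rule prod_dvd_prod_subset[OF fin sub])
  finally show "gfact S2 T k dvd gfact S1 T k"
    unfolding gfact_def B1_def B2_def .
qed

end
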